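(* Let $E$ be a $KB$-space, let $\mathfrak{B}$ be a Boolean subalgebra of $\mathfrak{B}(E)$, let $\xi$ be a forward filtration in $\mathfrak{B}$ and let $T$ be a $\mathfrak{B}$-Volterra operator on $E$. Then $\hat{T}_{\xi}\colon\mathcal{M}_0(\xi)\to\mathcal{M}_0(\xi)$ induces a norm continuous operator $\hat{T}_{\xi}\colon\mathcal{M}_b(\xi)\to\mathcal{M}_b(\xi)$, and with $\iota_{\xi}\colon E\to\mathcal{M}_b(\xi)$, $\iota_\xi(x)=(\xi_nx)_{n\ge1}$, one has $\iota_\xi\circ T=\hat{T}_\xi\circ\iota_\xi$ and $\mathbf{s}\circ\hat{T}_\xi=\hat{T}_{L(\xi)}\circ\mathbf{s}$ as maps $\mathcal{M}_b(\xi)\to\mathcal{M}_b(L(\xi))$; all maps involved are norm continuous operators between Banach lattices.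
   Context: A $KB$-space is a Banach lattice in which every increasing norm bounded sequence is norm convergent (its norm is order continuous). $\mathfrak{B}(E)$ is the Boolean algebra of all order projections on $E$ ($\pi\le\rho$ iff $\pi\rho=\pi$, $\pi^*=I_E-\pi$, zero $\mathbf 0$, unit $\mathbf 1=I_E$). A positive operator $T$ is $\mathfrak{B}$-Volterra if for all $\pi\in\mathfrak{B}$, $x,y\in E$, $\pi x=\pi y$ implies $\pi Tx=\pi Ty$. A forward filtration in $\mathfrak{B}$ is a map $\xi\colon\{0,1,\dots,\infty\}\to\mathfrak{B}$ with $\xi_n\le\xi_{n+1}$, $\xi_0=\mathbf 0$, $\xi_\infty=\mathbf 1$; $L(\xi)_0=\xi_0$, $L(\xi)_n=\xi_{n+1}$ for $n\ge1$. $\mathcal{M}_0(\xi)$ is the set of sequences $(x_n)_{n\ge1}$ in $E$ with $\xi_nx_m=x_n$ for $m\ge n\ge1$; $\mathcal{M}_b(\xi)$ is the subset with $\sup_n\|x_n\|<\infty$, with coordinatewise order and norm $\sup_n\|x_n\|$. $\hat{T}_\xi((x_n))=(\xi_nTx_n)$, and $\mathbf{s}((x_n)_{n\ge1})=(x_{n+1})_{n\ge1}$. *)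

theory Defs
  imports "HOL-Analysis.Analysis"
begin

text \<open>The vector-lattice structure is given by the type classes ordered_real_vector and lattice
  (on a common order); the lattice-norm axiom is the predicate below.\<close>

definition lat_abs :: "'a::{ab_group_add, lattice} \<Rightarrow> 'a" where
  "lat_abs x = sup x (- x)"

definition banach_lattice :: "'a::{banach, ordered_real_vector, lattice} itself \<Rightarrow> bool" where
  "banach_lattice _ \<longleftrightarrow> (\<forall>x y::'a. lat_abs x \<le> lat_abs y \<longrightarrow> norm x \<le> norm y)"

definition KB_space :: "'a::{banach, ordered_real_vector, lattice} itself \<Rightarrow> bool" where
  "KB_space t \<longleftrightarrow> banach_lattice t \<and>
     (\<forall>X::nat \<Rightarrow> 'a. incseq X \<and> bounded (range X) \<longrightarrow> convergent X)"

definition order_projection :: "('a::{real_vector, ordered_ab_group_add} \<Rightarrow> 'a) \<Rightarrow> bool" where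
  "order_projection P \<longleftrightarrow> linear P \<and> P \<circ> P = P \<and> (\<forall>x. 0 \<le> x \<longrightarrow> 0 \<le> P x \<and> P x \<le> x)"

text \<open>Boolean subalgebra of the Boolean algebra of order projections
  (meet = composition, complement = I - P, zero = 0, unit = I).\<close>
definition bool_subalg :: "('a::{real_vector, ordered_ab_group_add} \<Rightarrow> 'a) set \<Rightarrow> bool" where
  "bool_subalg B \<longleftrightarrow> (\<forall>P\<in>B. order_projection P) \<and> (\<lambda>x. 0) \<in> B \<and> id \<in> B \<and>
     (\<forall>P\<in>B. \<forall>Q\<in>B. P \<circ> Q \<in> B) \<and> (\<forall>P\<in>B. (\<lambda>x. x - P x) \<in> B)"

definition proj_le :: "('a \<Rightarrow> 'a) \<Rightarrow> ('a \<Rightarrow> 'a) \<Rightarrow> bool" where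
  "proj_le P Q \<longleftrightarrow> P \<circ> Q = P"

definition positive_op :: "('a::{real_vector, ordered_ab_group_add} \<Rightarrow> 'a) \<Rightarrow> bool" where
  "positive_op T \<longleftrightarrow> linear T \<and> (\<forall>x. 0 \<le> x \<longrightarrow> 0 \<le> T x)"

definition volterra :: "('a::{real_vector, ordered_ab_group_add} \<Rightarrow> 'a) set \<Rightarrow> ('a \<Rightarrow> 'a) \<Rightarrow> bool" where
  "volterra B T \<longleftrightarrow> positive_op T \<and>
     (\<forall>P\<in>B. \<forall>x y. P x = P y \<longrightarrow> P (T x) = P (T y))"

text \<open>Forward filtration: \<xi>_0,\<xi>_1,... in B, increasing, \<xi>_0 = 0; the value \<xi>_\<infinity> = I is implicit.\<close>
definition forward_filtration ::
  "('a::{real_vector, ordered_ab_group_add} \<Rightarrow> 'a) set \<Rightarrow> (nat \<Rightarrow> 'a \<Rightarrow> 'a) \<Rightarrow> bool" where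
  "forward_filtration B \<xi> \<longleftrightarrow> (\<forall>n. \<xi> n \<in> B) \<and> (\<forall>n. proj_le (\<xi> n) (\<xi> (Suc n))) \<and>
     \<xi> 0 = (\<lambda>x. 0) \<and> id \<in> B"

definition Lshift :: "(nat \<Rightarrow> 'a \<Rightarrow> 'a) \<Rightarrow> nat \<Rightarrow> 'a \<Rightarrow> 'a" where
  "Lshift \<xi> n = (if n = 0 then \<xi> 0 else \<xi> (Suc n))"

text \<open>Sequences (x_n)_{n\<ge>1} are encoded as functions nat \<Rightarrow> 'a; the condition is imposed also
  for n = 0, which (as \<xi>_0 = 0) just forces the dummy entry x 0 to be 0.\<close>
definition M0 :: "(nat \<Rightarrow> 'a \<Rightarrow> 'a) \<Rightarrow> (nat \<Rightarrow> 'a) set" where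
  "M0 \<xi> = {x. \<forall>n m. n \<le> m \<longrightarrow> \<xi> n (x m) = x n}"

definition Mb :: "(nat \<Rightarrow> 'a \<Rightarrow> 'a) \<Rightarrow> (nat \<Rightarrow> 'a::real_normed_vector) set" where
  "Mb \<xi> = {x \<in> M0 \<xi>. bounded (range x)}"

definition supnorm :: "(nat \<Rightarrow> 'a::real_normed_vector) \<Rightarrow> real" where
  "supnorm x = (SUP n. norm (x n))"

definition That :: "(nat \<Rightarrow> 'a \<Rightarrow> 'a) \<Rightarrow> ('a \<Rightarrow> 'a) \<Rightarrow> (nat \<Rightarrow> 'a) \<Rightarrow> nat \<Rightarrow> 'a" where
  "That \<xi> T x = (\<lambda>n. \<xi> n (T (x n)))"

definition sshift :: "(nat \<Rightarrow> 'a::zero) \<Rightarrow> nat \<Rightarrow> 'a" where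
  "sshift x = (\<lambda>n. if n = 0 then 0 else x (Suc n))"

definition iota :: "(nat \<Rightarrow> 'a \<Rightarrow> 'a) \<Rightarrow> 'a \<Rightarrow> nat \<Rightarrow> 'a" where
  "iota \<xi> x = (\<lambda>n. \<xi> n x)"

text \<open>S is a Banach lattice under coordinatewise operations/order and the sup norm:
  a linear subspace closed under coordinatewise sup/inf that is complete for the sup norm
  (the lattice-norm property is then inherited from 'a).\<close>
definition seq_banach_lattice ::
  "(nat \<Rightarrow> 'a::{real_normed_vector, lattice}) set \<Rightarrow> bool" where
  "seq_banach_lattice S \<longleftrightarrow>
     (\<forall>x\<in>S. bounded (range x)) \<and> (\<lambda>n. 0) \<in> S \<and>
     (\<forall>x\<in>S. \<forall>y\<in>S. (\<lambda>n. x n + y n) \<in> S) \<and> (\<forall>c. \<forall>x\<in>S. (\<lambda>n. c *\<^sub>R x n) \<in> S) \<and>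
     (\<forall>x\<in>S. \<forall>y\<in>S. (\<lambda>n. sup (x n) (y n)) \<in> S \<and> (\<lambda>n. inf (x n) (y n)) \<in> S) \<and>
     (\<forall>X::nat \<Rightarrow> nat \<Rightarrow> 'a. (\<forall>k. X k \<in> S) \<and>
         (\<forall>e>0. \<exists>N. \<forall>k\<ge>N. \<forall>l\<ge>N. supnorm (\<lambda>n. X k n - X l n) < e) \<longrightarrow>
       (\<exists>x\<in>S. (\<lambda>k. supnorm (\<lambda>n. X k n - x n)) \<longlonglongrightarrow> 0))"

definition seq_bounded_op ::
  "(nat \<Rightarrow> 'a::real_normed_vector) set \<Rightarrow> (nat \<Rightarrow> 'a) set \<Rightarrow> ((nat \<Rightarrow> 'a) \<Rightarrow> (nat \<Rightarrow> 'a)) \<Rightarrow> bool" where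
  "seq_bounded_op S S' f \<longleftrightarrow> (\<forall>x\<in>S. f x \<in> S') \<and>
     (\<forall>x\<in>S. \<forall>y\<in>S. f (\<lambda>n. x n + y n) = (\<lambda>n. f x n + f y n)) \<and>
     (\<forall>c. \<forall>x\<in>S. f (\<lambda>n. c *\<^sub>R x n) = (\<lambda>n. c *\<^sub>R f x n)) \<and>
     (\<exists>C. \<forall>x\<in>S. supnorm (f x) \<le> C * supnorm x)"

definition vec_seq_bounded_op ::
  "(nat \<Rightarrow> 'a::real_normed_vector) set \<Rightarrow> ('a \<Rightarrow> (nat \<Rightarrow> 'a)) \<Rightarrow> bool" where
  "vec_seq_bounded_op S' f \<longleftrightarrow> (\<forall>x. f x \<in> S') \<and>
     (\<forall>x y. f (x + y) = (\<lambda>n. f x n + f y n)) \<and> (\<forall>c x. f (c *\<^sub>R x) = (\<lambda>n. c *\<^sub>R f x n)) \<and>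
     (\<exists>C. \<forall>x. supnorm (f x) \<le> C * norm x)"

end

theory Submission
  imports Defs
begin

context
  fixes dummy :: "'a::{ordered_ab_group_add, lattice}"
begin

lemma asup_l: "(a::'a) + sup b c = sup (a + b) (a + c)" (is "?L = ?R")
proof (rule order.antisym)
  show "?L \<le> ?R"
    by (metis add.commute le_diff_eq sup.bounded_iff sup_ge1 sup_ge2)
qed simp

lemma ainf_l: "(a::'a) + inf b c = inf (a + b) (a + c)" (is "?L=?R")
proof (intro order.antisym)
  show "?R \<le> ?L"
  by (metis add.commute diff_le_eq inf_greatest inf_le1 inf_le2)
qed simp

lemma ainf_neg: "inf (a::'a) b = - sup (- a) (- b)"
proof (rule inf_unique)
  fix a b c :: 'a
  show "- sup (- a) (- b) \<le> a"
    by (rule add_le_imp_le_right [of _ "sup (uminus a) (uminus b)"])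
      (simp, simp add: asup_l)
  show "- sup (-a) (-b) \<le> b"
    by (rule add_le_imp_le_right [of _ "sup (uminus a) (uminus b)"])
      (simp, simp add: asup_l)
  assume "a \<le> b" "a \<le> c"
  then show "a \<le> - sup (-b) (-c)"
    by (subst neg_le_iff_le [symmetric]) (simp add: le_supI)
qed

lemma aadd_eq: "(a::'a) + b = sup a b + inf a b"
proof -
  have "0 = - inf 0 (a - b) + inf (a - b) 0"
    by (simp add: inf_commute)
  then have "0 = sup 0 (b - a) + inf (a - b) 0"
    by (simp add: ainf_neg)
  then have "0 = (- a + sup a b) + (inf a b + (- b))"
    using asup_l[of "-a" a b] ainf_l[of "-b" a b]
    by (simp add: add.commute)
  then show ?thesis
    by (simp add: algebra_simps)
qed

lemma apos_decomp: "sup (z::'a) 0 - sup (-z) 0 = z"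
proof -
  have "sup (-z) 0 = -z + sup z 0" using asup_l[of "-z" z 0] by (simp add: sup_commute)
  thus ?thesis by (simp add: algebra_simps)
qed

lemma apos_disj: "inf (sup (z::'a) 0) (sup (-z) 0) = 0"
proof -
  have "sup (-z) 0 = sup z 0 + (- z)" using asup_l[of "-z" z 0] by (simp add: add.commute sup_commute)
  hence "inf (sup z 0) (sup (-z) 0) = inf (sup z 0 + 0) (sup z 0 + -z)" by (simp add: sup_commute)
  also have "\<dots> = sup z 0 + inf 0 (-z)" by (simp add: ainf_l)
  also have "inf 0 (-z) = - sup 0 z" by (simp add: ainf_neg)
  finally show ?thesis by (simp add: sup_commute)
qed

lemma adisj_sup: "0 \<le> (a::'a) \<Longrightarrow> 0 \<le> b \<Longrightarrow> inf a b = 0 \<Longrightarrow> sup (a - b) 0 = a"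
proof -
  assume "0 \<le> a" "0 \<le> b" "inf a b = 0"
  have "sup (a - b) 0 = -b + sup a b" using asup_l[of "-b" a b] by simp
  also have "sup a b = a + b" using aadd_eq[of a b] \<open>inf a b = 0\<close> by simp
  finally show ?thesis by simp
qed

end


lemma labs_ge: "(x::'a::{ordered_ab_group_add, lattice}) \<le> lat_abs x" "- x \<le> lat_abs x"
  by (auto simp: lat_abs_def)

lemma labs_nonneg: "0 \<le> lat_abs (x::'a::{ordered_real_vector, lattice})"
proof -
  have "x + - x \<le> lat_abs x + lat_abs x" using labs_ge[of x] by (rule add_mono)
  hence "0 \<le> (2::real) *\<^sub>R lat_abs x" by (simp add: scaleR_2)
  hence "0 \<le> (1/2::real) *\<^sub>R ((2::real) *\<^sub>R lat_abs x)" by (rule scaleR_nonneg_nonneg[rotated]) simp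
  thus ?thesis by simp
qed

lemma labs_pos: "0 \<le> (x::'a::{ordered_ab_group_add, lattice}) \<Longrightarrow> lat_abs x = x"
  proof -
  assume h: "0 \<le> x"
  hence "-x \<le> 0" by simp
  hence "-x \<le> x" using h by (rule order.trans)
  thus ?thesis unfolding lat_abs_def by (rule sup_absorb1)
qed

lemma bl_norm_le: "banach_lattice TYPE('a::{banach, ordered_real_vector, lattice}) \<Longrightarrow>
   0 \<le> (a::'a) \<Longrightarrow> a \<le> lat_abs y \<Longrightarrow> norm a \<le> norm y"
proof -
  assume bl: "banach_lattice TYPE('a)" and h: "0 \<le> a" "a \<le> lat_abs y"
  have "lat_abs a \<le> lat_abs y" using h labs_pos[OF h(1)] by simp
  thus ?thesis using bl unfolding banach_lattice_def by blast
qed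

lemma bl_norm_mono: "banach_lattice TYPE('a::{banach, ordered_real_vector, lattice}) \<Longrightarrow>
   0 \<le> (a::'a) \<Longrightarrow> a \<le> b \<Longrightarrow> norm a \<le> norm b"
proof -
  assume bl: "banach_lattice TYPE('a)" and h: "0 \<le> a" "a \<le> b"
  have "0 \<le> b" using h by (rule order.trans)
  hence "a \<le> lat_abs b" using h labs_pos[of b] by simp
  thus ?thesis by (rule bl_norm_le[OF bl h(1)])
qed

lemma bl_pprt: "banach_lattice TYPE('a::{banach, ordered_real_vector, lattice}) \<Longrightarrow>
   norm (sup (x::'a) 0) \<le> norm x"
  proof (rule bl_norm_le)
  show "sup (x::'a) 0 \<le> lat_abs x" by (metis labs_ge(1) labs_nonneg sup.bounded_iff) 
qed auto

lemma bl_nprt: "banach_lattice TYPE('a::{banach, ordered_real_vector, lattice}) \<Longrightarrow>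
   norm (sup (-x::'a) 0) \<le> norm x"
  proof (rule bl_norm_le)
  show "sup (-x::'a) 0 \<le> lat_abs x" by (metis labs_ge(2) labs_nonneg sup.bounded_iff) 
qed auto

lemma labs_minus: "lat_abs (x - y) = lat_abs (y - (x::'a::{ordered_ab_group_add, lattice}))"
  unfolding lat_abs_def by (simp add: sup_commute)

lemma bl_closed_cone:
  assumes bl: "banach_lattice TYPE('a::{banach, ordered_real_vector, lattice})"
    and lim: "f \<longlonglongrightarrow> (l::'a)" and pos: "\<And>k. 0 \<le> f k"
  shows "0 \<le> l"
proof -
  define m where "m = sup (-l) 0"
  have "norm m \<le> norm (f k - l)" for k
  proof (rule bl_norm_le[OF bl])
    show "0 \<le> m" by (simp add: m_def)
    have "-l \<le> f k - l" using pos[of k] by simp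
    also have "\<dots> \<le> lat_abs (f k - l)" by (rule labs_ge)
    finally show "m \<le> lat_abs (f k - l)" unfolding m_def using labs_nonneg by simp
  qed
  moreover have "(\<lambda>k. norm (f k - l)) \<longlonglongrightarrow> 0"
    using lim by (simp add: LIM_zero_iff tendsto_norm_zero)
  ultimately have "norm m \<le> 0"
    by (intro LIMSEQ_le_const) auto
  hence "m = 0" by simp
  hence "-l \<le> 0" unfolding m_def using sup.cobounded1[of "-l" 0] by simp
  thus ?thesis by simp
qed

lemma oproj_basic:
  assumes "order_projection P"
  shows "P (x + y) = P x + P y" "P (c *\<^sub>R x) = c *\<^sub>R P x" "P (- x) = - P x"
     "P (x - y) = P x - P y" "P 0 = 0" "P (P x) = P x"
     "0 \<le> z \<Longrightarrow> 0 \<le> P z" "0 \<le> z \<Longrightarrow> P z \<le> z"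
proof -
  have l: "linear P" and i: "P \<circ> P = P" and p: "\<forall>x. 0 \<le> x \<longrightarrow> 0 \<le> P x \<and> P x \<le> x"
    using assms unfolding order_projection_def by auto
  show "P (x + y) = P x + P y" by (rule linear_add[OF l])
  show "P (c *\<^sub>R x) = c *\<^sub>R P x" by (rule linear_scale[OF l])
  show "P (- x) = - P x" by (rule linear_neg[OF l])
  show "P (x - y) = P x - P y" by (rule linear_diff[OF l])
  show "P 0 = 0" by (rule linear_0[OF l])
  show "P (P x) = P x" using i by (metis comp_apply)
  show "0 \<le> z \<Longrightarrow> 0 \<le> P z" using p by blast
  show "0 \<le> z \<Longrightarrow> P z \<le> z" using p by blast
qed


lemma oproj_pprt:
  fixes P :: "'a::{ordered_real_vector, lattice} \<Rightarrow> 'a"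
  assumes P: "order_projection P"
  shows "P (sup z 0) = sup (P z) 0"
proof -
  let ?a = "P (sup z 0)" and ?b = "P (sup (-z) 0)"
  have a0: "0 \<le> ?a" and b0: "0 \<le> ?b" using oproj_basic(7)[OF P] by simp_all
  have "inf ?a ?b \<le> inf (sup z 0) (sup (-z) 0)"
    by (rule inf_mono; rule oproj_basic(8)[OF P]; simp)
  hence "inf ?a ?b \<le> 0" by (simp add: apos_disj)
  moreover have "0 \<le> inf ?a ?b" using a0 b0 by simp
  ultimately have d: "inf ?a ?b = 0" by (rule order.antisym)
  have "P z = ?a - ?b" using oproj_basic(4)[OF P] apos_decomp[of z] by metis
  thus ?thesis using adisj_sup[OF a0 b0 d] by simp
qed

lemma oproj_sup:
  fixes P :: "'a::{ordered_real_vector, lattice} \<Rightarrow> 'a"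
  assumes P: "order_projection P"
  shows "P (sup x y) = sup (P x) (P y)"
proof -
  have e: "sup u v = v + sup (u - v) 0" for u v :: 'a
    using asup_l[of v "u - v" 0] by simp
  have "P (sup x y) = P y + P (sup (x - y) 0)" by (subst e[of x y]) (rule oproj_basic(1)[OF P])
  also have "\<dots> = P y + sup (P x - P y) 0" by (simp add: oproj_pprt[OF P] oproj_basic(4)[OF P])
  also have "\<dots> = sup (P x) (P y)" by (rule e[symmetric])
  finally show ?thesis .
qed

lemma oproj_inf:
  fixes P :: "'a::{ordered_real_vector, lattice} \<Rightarrow> 'a"
  assumes P: "order_projection P"
  shows "P (inf x y) = inf (P x) (P y)"
proof -
  have e: "inf u v = u + v - sup u v" for u v :: 'a
    using aadd_eq[of u v] by (simp add: algebra_simps)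
  show ?thesis
    by (simp only: e[of x y] e[of "P x" "P y"] oproj_sup[OF P] oproj_basic(1,4)[OF P])
qed

lemma oproj_norm:
  fixes P :: "'a::{banach, ordered_real_vector, lattice} \<Rightarrow> 'a"
  assumes bl: "banach_lattice TYPE('a)" and P: "order_projection P"
  shows "norm (P x) \<le> norm x"
proof -
  have "lat_abs (P x) = P (lat_abs x)"
    unfolding lat_abs_def by (simp add: oproj_sup[OF P] oproj_basic(3)[OF P])
  also have "\<dots> \<le> lat_abs x" by (rule oproj_basic(8)[OF P labs_nonneg])
  finally show ?thesis using bl unfolding banach_lattice_def by blast
qed


lemma pos_op_bounded:
  fixes T :: "'a::{banach, ordered_real_vector, lattice} \<Rightarrow> 'a"
  assumes bl: "banach_lattice TYPE('a)" and T: "positive_op T"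
  shows "bounded_linear T"
proof -
  have lT: "linear T" and pT: "\<And>x. 0 \<le> x \<Longrightarrow> 0 \<le> T x" using T unfolding positive_op_def by auto
  have Tmono: "norm (T a) \<le> norm (T b)" if "0 \<le> a" "a \<le> b" for a b
  proof -
    have "0 \<le> T (b - a)" using that by (intro pT) simp
    hence "T a \<le> T b" by (simp add: linear_diff[OF lT])
    thus ?thesis using pT[OF that(1)] by (rule bl_norm_mono[OF bl, rotated])
  qed
  have "\<exists>M. \<forall>x. 0 \<le> x \<longrightarrow> norm x \<le> 1 \<longrightarrow> norm (T x) \<le> M"
  proof (rule ccontr)
    assume "\<not> ?thesis"
    hence "\<forall>n::nat. \<exists>x. 0 \<le> x \<and> norm x \<le> 1 \<and> 4 ^ n < norm (T x)"
      by (metis not_le)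
    then obtain x where x: "\<And>n. 0 \<le> x n" "\<And>n. norm (x n) \<le> 1" "\<And>n. 4 ^ n < norm (T (x n))"
      by metis
    define u where "u n = (1/2::real) ^ n *\<^sub>R x n" for n
    have u0: "0 \<le> u n" for n unfolding u_def using x(1) by (simp add: scaleR_nonneg_nonneg)
    have un: "norm (u n) \<le> (1/2::real) ^ n" for n
      unfolding u_def using x(2)[of n] by (simp add: mult_left_le)
    have "summable (\<lambda>n. norm (u n))"
      by (rule summable_comparison_test[OF _ summable_geometric[of "1/2::real"]]) (use un in auto)
    hence su: "summable u" by (rule summable_norm_cancel)
    define y where "y = suminf u"
    have ly: "(\<lambda>N. \<Sum>i<N. u i) \<longlonglongrightarrow> y" unfolding y_def using su by (rule summable_LIMSEQ)
    have uy: "u n \<le> y" for n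
    proof -
      have "(\<lambda>k. (\<Sum>i<k + Suc n. u i) - u n) \<longlonglongrightarrow> y - u n"
        by (intro tendsto_diff LIMSEQ_ignore_initial_segment[OF ly] tendsto_const)
      moreover have "0 \<le> (\<Sum>i<k + Suc n. u i) - u n" for k
      proof -
        have "(\<Sum>i<k + Suc n. u i) - u n = (\<Sum>i\<in>{..<k + Suc n} - {n}. u i)"
          by (simp add: sum_diff1)
        also have "0 \<le> \<dots>" by (rule sum_nonneg) (rule u0)
        finally show ?thesis by simp
      qed
      ultimately have "0 \<le> y - u n" by (rule bl_closed_cone[OF bl])
      thus ?thesis by simp
    qed
    have "2 ^ n < norm (T y)" for n
    proof -
      have "(2::real) ^ n = (1/2) ^ n * 4 ^ n" proof -
        have "(4::real) ^ n = 2 ^ n * 2 ^ n" by (simp flip: power_mult_distrib)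
        thus ?thesis by (simp add: power_divide)
      qed
      also have "\<dots> < (1/2) ^ n * norm (T (x n))" using x(3)[of n] by simp
      also have "\<dots> = norm (T (u n))" unfolding u_def by (simp add: linear_scale[OF lT])
      also have "\<dots> \<le> norm (T y)" by (rule Tmono[OF u0 uy])
      finally show ?thesis .
    qed
    moreover obtain n where "norm (T y) < 2 ^ n" using real_arch_pow[of 2 "norm (T y)"] by auto
    ultimately show False by (metis less_asym)
  qed
  then obtain M where M: "\<And>x. 0 \<le> x \<Longrightarrow> norm x \<le> 1 \<Longrightarrow> norm (T x) \<le> M" by blast
  have M0: "0 \<le> M" using M[of 0] by (simp add: linear_0[OF lT])
  have Mp: "norm (T x) \<le> M * norm x" if "0 \<le> x" for x
  proof (cases "x = 0")
    case True thus ?thesis by (simp add: linear_0[OF lT])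
  next
    case False
    define x' where "x' = (1 / norm x) *\<^sub>R x"
    have "0 \<le> x'" unfolding x'_def using that by (simp add: scaleR_nonneg_nonneg)
    moreover have "norm x' \<le> 1" unfolding x'_def using False by simp
    ultimately have "norm (T x') \<le> M" by (rule M)
    moreover have "T x = norm x *\<^sub>R T x'" unfolding x'_def using False
      by (simp add: linear_scale[OF lT])
    ultimately show ?thesis by (simp add: mult.commute[of M] mult_left_mono)
  qed
  show ?thesis
  proof (rule bounded_linear_intro[where K = "2 * M"])
    show "T (x + y) = T x + T y" for x y by (rule linear_add[OF lT])
    show "T (r *\<^sub>R x) = r *\<^sub>R T x" for r x by (rule linear_scale[OF lT])
    show "norm (T x) \<le> norm x * (2 * M)" for x
    proof -
      have "T x = T (sup x 0) - T (sup (-x) 0)"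
        using apos_decomp[of x] linear_diff[OF lT] by metis
      hence "norm (T x) \<le> norm (T (sup x 0)) + norm (T (sup (-x) 0))"
        by (metis norm_triangle_ineq4)
      also have "\<dots> \<le> M * norm (sup x 0) + M * norm (sup (-x) 0)"
        by (intro add_mono Mp) simp_all
      also have "\<dots> \<le> M * norm x + M * norm x"
        by (intro add_mono mult_left_mono bl_pprt[OF bl] bl_nprt[OF bl] M0)
      finally show ?thesis by (simp add: algebra_simps)
    qed
  qed
qed


lemma bdd_norm: "bounded (range (x::nat \<Rightarrow> 'a::real_normed_vector)) \<Longrightarrow> \<exists>B. \<forall>n. norm (x n) \<le> B"
  by (auto simp: bounded_iff)

lemma bdd_normI: "(\<And>n. norm (x n) \<le> B) \<Longrightarrow> bounded (range (x::nat \<Rightarrow> 'a::real_normed_vector))"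
  by (auto simp: bounded_iff)

lemma sn_ge: "bounded (range x) \<Longrightarrow> norm (x n) \<le> supnorm x"
  unfolding supnorm_def
proof (rule cSUP_upper)
  assume "bounded (range x)"
  then obtain B where "\<forall>n. norm (x n) \<le> B" using bdd_norm by blast
  thus "bdd_above (range (\<lambda>n. norm (x n)))" by (auto intro: bdd_aboveI)
qed simp

lemma sn_le: "(\<And>n. norm (x n) \<le> C) \<Longrightarrow> supnorm x \<le> C"
  unfolding supnorm_def by (rule cSUP_least) auto

lemma sn_nonneg: "bounded (range x) \<Longrightarrow> 0 \<le> supnorm x"
  using sn_ge[of x 0] norm_ge_zero order.trans by blast

lemma labs_idem: "lat_abs (lat_abs (x::'a::{ordered_real_vector, lattice})) = lat_abs x"
  by (rule labs_pos[OF labs_nonneg])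

lemma bl_norm_labs: "banach_lattice TYPE('a::{banach, ordered_real_vector, lattice}) \<Longrightarrow>
   norm (lat_abs (x::'a)) = norm x"
  unfolding banach_lattice_def by (metis labs_idem order.refl order.antisym)

lemma bl_norm_sup: 
  assumes bl: "banach_lattice TYPE('a::{banach, ordered_real_vector, lattice})"
  shows "norm (sup (a::'a) b) \<le> norm a + norm b"
proof -
  define c where "c = lat_abs a + lat_abs b"
  have c0: "0 \<le> c" unfolding c_def by (simp add: labs_nonneg add_nonneg_nonneg)
  have "sup a b \<le> c"
  proof (rule sup_least)
    show "a \<le> c" unfolding c_def using labs_ge(1)[of a] labs_nonneg[of b]
      by (metis add.right_neutral add_mono)
    show "b \<le> c" unfolding c_def using labs_ge(1)[of b] labs_nonneg[of a]
      by (metis add.left_neutral add_mono)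
  qed
  moreover have "- sup a b \<le> c"
  proof -
    have "- sup a b \<le> - a" by simp
    also have "\<dots> \<le> c" unfolding c_def using labs_ge(2)[of a] labs_nonneg[of b]
      by (metis add.right_neutral add_mono)
    finally show ?thesis .
  qed
  ultimately have "lat_abs (sup a b) \<le> c" unfolding lat_abs_def by simp
  hence "norm (sup a b) \<le> norm c" using bl labs_pos[OF c0] unfolding banach_lattice_def by metis
  also have "\<dots> \<le> norm (lat_abs a) + norm (lat_abs b)" unfolding c_def by (rule norm_triangle_ineq)
  finally show ?thesis using bl_norm_labs[OF bl] by simp
qed

lemma bl_norm_inf: 
  assumes bl: "banach_lattice TYPE('a::{banach, ordered_real_vector, lattice})"
  shows "norm (inf (a::'a) b) \<le> 2 * (norm a + norm b)"
proof -
  have e: "inf a b = a + b - sup a b"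
    using aadd_eq[of a b] by (simp add: algebra_simps)
  have "norm (inf a b) \<le> norm (a + b) + norm (sup a b)" unfolding e by (rule norm_triangle_ineq4)
  also have "\<dots> \<le> (norm a + norm b) + (norm a + norm b)"
    by (intro add_mono norm_triangle_ineq bl_norm_sup[OF bl])
  finally show ?thesis by simp
qed

lemma oproj_bl:
  assumes bl: "banach_lattice TYPE('a::{banach, ordered_real_vector, lattice})"
    and P: "order_projection (P::'a \<Rightarrow> 'a)"
  shows "bounded_linear P"
  by (rule bounded_linear_intro[where K=1]) (auto simp: oproj_basic[OF P] oproj_norm[OF bl P])


lemma sbl:
  fixes \<eta> :: "nat \<Rightarrow> 'a::{banach, ordered_real_vector, lattice} \<Rightarrow> 'a"
  assumes bl: "banach_lattice TYPE('a)" and P: "\<And>n. order_projection (\<eta> n)"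
  shows "seq_banach_lattice (Mb \<eta>)"
  unfolding seq_banach_lattice_def
proof (intro conjI ballI allI impI)
  note ob = oproj_basic[OF P]
  show "bounded (range x)" if "x \<in> Mb \<eta>" for x using that by (simp add: Mb_def)
  show "(\<lambda>n. 0) \<in> Mb \<eta>" by (simp add: Mb_def M0_def ob)
  show "(\<lambda>n. x n + y n) \<in> Mb \<eta>" if h: "x \<in> Mb \<eta>" "y \<in> Mb \<eta>" for x y
  proof -
    obtain A B where "\<And>n. norm (x n) \<le> A" "\<And>n. norm (y n) \<le> B"
      using h bdd_norm unfolding Mb_def by (metis (no_types, lifting) mem_Collect_eq)
    hence "bounded (range (\<lambda>n. x n + y n))"
      by (intro bdd_normI[where B="A+B"]) (metis add_mono norm_triangle_ineq order.trans)
    thus ?thesis using h by (auto simp: Mb_def M0_def ob)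
  qed
  show "(\<lambda>n. c *\<^sub>R x n) \<in> Mb \<eta>" if h: "x \<in> Mb \<eta>" for x c
  proof -
    obtain A where A: "\<And>n. norm (x n) \<le> A"
      using h bdd_norm unfolding Mb_def by (metis (no_types, lifting) mem_Collect_eq)
    hence "bounded (range (\<lambda>n. c *\<^sub>R x n))"
      by (intro bdd_normI[where B="\<bar>c\<bar> * A"]) (simp add: mult_left_mono)
    thus ?thesis using h by (auto simp: Mb_def M0_def ob)
  qed
  show "(\<lambda>n. sup (x n) (y n)) \<in> Mb \<eta>" if h: "x \<in> Mb \<eta>" "y \<in> Mb \<eta>" for x y
  proof -
    obtain A B where "\<And>n. norm (x n) \<le> A" "\<And>n. norm (y n) \<le> B"
      using h bdd_norm unfolding Mb_def by (metis (no_types, lifting) mem_Collect_eq)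
    hence "bounded (range (\<lambda>n. sup (x n) (y n)))"
      by (intro bdd_normI[where B="A+B"]) (metis add_mono bl_norm_sup[OF bl] order.trans)
    thus ?thesis using h by (auto simp: Mb_def M0_def oproj_sup[OF P])
  qed
  show "(\<lambda>n. inf (x n) (y n)) \<in> Mb \<eta>" if h: "x \<in> Mb \<eta>" "y \<in> Mb \<eta>" for x y
  proof -
    obtain A B where "\<And>n. norm (x n) \<le> A" "\<And>n. norm (y n) \<le> B"
      using h bdd_norm unfolding Mb_def by (metis (no_types, lifting) mem_Collect_eq)
    hence "bounded (range (\<lambda>n. inf (x n) (y n)))"
      by (intro bdd_normI[where B="2*(A+B)"]) (metis add_mono bl_norm_inf[OF bl] order.trans mult_left_mono zero_le_numeral)
    thus ?thesis using h by (auto simp: Mb_def M0_def oproj_inf[OF P])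
  qed
  fix X :: "nat \<Rightarrow> nat \<Rightarrow> 'a"
  assume "(\<forall>k. X k \<in> Mb \<eta>) \<and> (\<forall>e>0. \<exists>N. \<forall>k\<ge>N. \<forall>l\<ge>N. supnorm (\<lambda>n. X k n - X l n) < e)"
  hence XM: "\<And>k. X k \<in> Mb \<eta>" and XC: "\<And>e. e > 0 \<Longrightarrow> \<exists>N. \<forall>k\<ge>N. \<forall>l\<ge>N. supnorm (\<lambda>n. X k n - X l n) < e"
    by auto
  have Xb: "bounded (range (X k))" for k using XM[of k] by (simp add: Mb_def)
  have Xd: "norm (X k n - X l n) \<le> supnorm (\<lambda>n. X k n - X l n)" for k l n
  proof (rule sn_ge)
    obtain A B where "\<And>n. norm (X k n) \<le> A" "\<And>n. norm (X l n) \<le> B"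
      using Xb bdd_norm by metis
    thus "bounded (range (\<lambda>n. X k n - X l n))"
      by (intro bdd_normI[where B="A+B"]) (metis add_mono norm_triangle_ineq4 order.trans)
  qed
  have "Cauchy (\<lambda>k. X k n)" for n
  proof (rule CauchyI)
    fix e :: real assume "e > 0"
    then obtain N where "\<forall>k\<ge>N. \<forall>l\<ge>N. supnorm (\<lambda>n. X k n - X l n) < e" using XC by blast
    thus "\<exists>M. \<forall>m\<ge>M. \<forall>na\<ge>M. norm (X m n - X na n) < e"
      using Xd by (meson le_less_trans)
  qed
  hence "convergent (\<lambda>k. X k n)" for n by (simp add: Cauchy_convergent_iff)
  then obtain x where xl: "\<And>n. (\<lambda>k. X k n) \<longlonglongrightarrow> x n"
    unfolding convergent_def by metis
  have unif: "\<exists>N. \<forall>k\<ge>N. \<forall>n. norm (X k n - x n) \<le> e" if he: "e > 0" for e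
  proof -
    obtain N where N: "\<forall>k\<ge>N. \<forall>l\<ge>N. supnorm (\<lambda>n. X k n - X l n) < e" using XC he by blast
    have "norm (X k n - x n) \<le> e" if "k \<ge> N" for k n
    proof (rule LIMSEQ_le_const2)
      show "(\<lambda>l. norm (X k n - X l n)) \<longlonglongrightarrow> norm (X k n - x n)"
        by (intro tendsto_norm tendsto_diff tendsto_const xl)
      show "\<exists>M. \<forall>l\<ge>M. norm (X k n - X l n) \<le> e"
        using N that Xd by (meson less_imp_le order.trans)
    qed
    thus ?thesis by blast
  qed
  have xM0: "x \<in> M0 \<eta>"
    unfolding M0_def
  proof (intro CollectI allI impI)
    fix n m :: nat assume "n \<le> m"
    have "(\<lambda>k. \<eta> n (X k m)) \<longlonglongrightarrow> \<eta> n (x m)"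
      by (rule bounded_linear.tendsto[OF oproj_bl[OF bl P] xl])
    moreover have "\<eta> n (X k m) = X k n" for k using XM[of k] \<open>n \<le> m\<close> by (simp add: Mb_def M0_def)
    ultimately have "(\<lambda>k. X k n) \<longlonglongrightarrow> \<eta> n (x m)" by simp
    thus "\<eta> n (x m) = x n" using xl[of n] by (rule LIMSEQ_unique)
  qed
  obtain N where N: "\<forall>k\<ge>N. \<forall>n. norm (X k n - x n) \<le> 1" using unif[of 1] by auto
  obtain A where A: "\<And>n. norm (X N n) \<le> A" using Xb bdd_norm by metis
  have "norm (x n) \<le> A + 1" for n
  proof -
    have "norm (x n) \<le> norm (X N n) + norm (X N n - x n)" by (metis norm_triangle_sub norm_minus_commute)
    thus ?thesis using A[of n] N by (meson add_mono order.refl order.trans)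
  qed
  hence "bounded (range x)" by (rule bdd_normI)
  hence xMb: "x \<in> Mb \<eta>" using xM0 by (simp add: Mb_def)
  have "(\<lambda>k. supnorm (\<lambda>n. X k n - x n)) \<longlonglongrightarrow> 0"
  proof (rule LIMSEQ_I)
    fix r :: real assume "r > 0"
    then obtain N where N: "\<forall>k\<ge>N. \<forall>n. norm (X k n - x n) \<le> r/2" using unif[of "r/2"] by auto
    have "norm (supnorm (\<lambda>n. X k n - x n) - 0) < r" if "k \<ge> N" for k
    proof -
      have b: "bounded (range (\<lambda>n. X k n - x n))"
        using N that by (intro bdd_normI[where B="r/2"]) blast
      have "supnorm (\<lambda>n. X k n - x n) \<le> r/2" using N that by (intro sn_le) blast
      thus ?thesis using sn_nonneg[OF b] \<open>r > 0\<close> by simp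
    qed
    thus "\<exists>no. \<forall>n\<ge>no. norm (supnorm (\<lambda>na. X n na - x na) - 0) < r" by blast
  qed
  thus "\<exists>x\<in>Mb \<eta>. (\<lambda>k. supnorm (\<lambda>n. X k n - x n)) \<longlonglongrightarrow> 0" using xMb by blast
qed


lemma That_M0:
  fixes \<eta> :: "nat \<Rightarrow> 'a::{real_vector, ordered_ab_group_add} \<Rightarrow> 'a"
  assumes chain: "\<And>n m. n \<le> m \<Longrightarrow> \<eta> n \<circ> \<eta> m = \<eta> n"
    and vol: "\<And>n x y. \<eta> n x = \<eta> n y \<Longrightarrow> \<eta> n (T x) = \<eta> n (T y)"
    and x: "x \<in> M0 \<eta>"
  shows "That \<eta> T x \<in> M0 \<eta>"
  unfolding M0_def That_def
proof (intro CollectI allI impI)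
  fix n m :: nat assume nm: "n \<le> m"
  have "\<eta> n (\<eta> m (T (x m))) = (\<eta> n \<circ> \<eta> m) (T (x m))" by simp
  also have "\<dots> = \<eta> n (T (x m))" using chain[OF nm] by simp
  also have x1: "\<eta> n (x m) = x n" using x nm unfolding M0_def by blast
  have "\<eta> n (x n) = x n" using x unfolding M0_def by blast
  hence "\<eta> n (x m) = \<eta> n (x n)" using x1 by simp
  hence "\<eta> n (T (x m)) = \<eta> n (T (x n))" by (rule vol)
  finally show "\<eta> n (\<eta> m (T (x m))) = \<eta> n (T (x n))" .
qed

lemma That_op:
  fixes \<eta> :: "nat \<Rightarrow> 'a::{banach, ordered_real_vector, lattice} \<Rightarrow> 'a"
  assumes bl: "banach_lattice TYPE('a)" and P: "\<And>n. order_projection (\<eta> n)"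
    and chain: "\<And>n m. n \<le> m \<Longrightarrow> \<eta> n \<circ> \<eta> m = \<eta> n"
    and vol: "\<And>n x y. \<eta> n x = \<eta> n y \<Longrightarrow> \<eta> n (T x) = \<eta> n (T y)"
    and T: "bounded_linear T"
  shows "seq_bounded_op (Mb \<eta>) (Mb \<eta>) (That \<eta> T)"
proof -
  obtain K where K: "\<And>x. norm (T x) \<le> norm x * K" and K0: "K > 0"
    using bounded_linear.pos_bounded[OF T] by blast
  have pt: "norm (That \<eta> T x n) \<le> norm (x n) * K" for x n
    unfolding That_def by (rule order.trans[OF oproj_norm[OF bl P] K])
  show ?thesis unfolding seq_bounded_op_def
  proof (intro conjI ballI allI exI[where x=K])
    show "That \<eta> T x \<in> Mb \<eta>" if h: "x \<in> Mb \<eta>" for x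
    proof -
      have "bounded (range x)" using h by (simp add: Mb_def)
      then obtain A where A: "\<And>n. norm (x n) \<le> A" using bdd_norm by blast
      have "norm (That \<eta> T x n) \<le> A * K" for n
        using order.trans[OF pt[of x n] mult_right_mono[OF A[of n], of K]] K0 by simp
      hence "bounded (range (That \<eta> T x))" by (rule bdd_normI)
      thus ?thesis using That_M0[OF chain vol] h by (simp add: Mb_def)
    qed
    show "That \<eta> T (\<lambda>n. x n + y n) = (\<lambda>n. That \<eta> T x n + That \<eta> T y n)" for x y
      unfolding That_def by (simp add: linear_add[OF bounded_linear.linear[OF T]] oproj_basic(1)[OF P])
    show "That \<eta> T (\<lambda>n. c *\<^sub>R x n) = (\<lambda>n. c *\<^sub>R That \<eta> T x n)" for x c
      unfolding That_def by (simp add: linear_scale[OF bounded_linear.linear[OF T]] oproj_basic(2)[OF P])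
    show "supnorm (That \<eta> T x) \<le> K * supnorm x" if h: "x \<in> Mb \<eta>" for x
    proof (rule sn_le)
      fix n
      have "norm (x n) \<le> supnorm x" using h by (intro sn_ge) (simp add: Mb_def)
      hence "norm (x n) * K \<le> supnorm x * K" using K0 by (simp add: mult_right_mono)
      thus "norm (That \<eta> T x n) \<le> K * supnorm x" using pt[of x n] by (simp add: mult.commute)
    qed
  qed
qed

lemma ff_chain:
  assumes "forward_filtration B \<xi>" "bool_subalg B"
  shows "n \<le> m \<Longrightarrow> \<xi> n \<circ> \<xi> m = \<xi> n"
proof (induction m rule: dec_induct)
  case base
  have "order_projection (\<xi> n)" using assms unfolding forward_filtration_def bool_subalg_def by blast
  thus ?case unfolding order_projection_def by blast
next
  case (step k)
  have "\<xi> k \<circ> \<xi> (Suc k) = \<xi> k" using assms unfolding forward_filtration_def proj_le_def by blast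
  have ih: "\<xi> n \<circ> \<xi> k = \<xi> n" using step.IH by (simp add: o_def)
  have "\<xi> n \<circ> \<xi> (Suc k) = (\<xi> n \<circ> \<xi> k) \<circ> \<xi> (Suc k)" by (simp only: ih)
  also have "\<dots> = \<xi> n \<circ> \<xi> k" by (simp only: comp_assoc \<open>\<xi> k \<circ> \<xi> (Suc k) = \<xi> k\<close>)
  also have "\<dots> = \<xi> n" by (rule ih)
  finally show ?case .
qed


theorem theorem4p6:
  fixes B :: "('a::{banach, ordered_real_vector, lattice} \<Rightarrow> 'a) set"
    and \<xi> :: "nat \<Rightarrow> 'a \<Rightarrow> 'a"
    and T :: "'a \<Rightarrow> 'a"
  assumes "KB_space TYPE('a)"
    and "bool_subalg B"
    and "forward_filtration B \<xi>"
    and "volterra B T"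
  shows "(\<forall>x\<in>M0 \<xi>. That \<xi> T x \<in> M0 \<xi>)
    \<and> seq_banach_lattice (Mb \<xi>) \<and> seq_banach_lattice (Mb (Lshift \<xi>))
    \<and> seq_bounded_op (Mb \<xi>) (Mb \<xi>) (That \<xi> T)
    \<and> seq_bounded_op (Mb (Lshift \<xi>)) (Mb (Lshift \<xi>)) (That (Lshift \<xi>) T)
    \<and> vec_seq_bounded_op (Mb \<xi>) (iota \<xi>)
    \<and> bounded_linear T
    \<and> seq_bounded_op (Mb \<xi>) (Mb (Lshift \<xi>)) sshift
    \<and> (\<forall>x. iota \<xi> (T x) = That \<xi> T (iota \<xi> x))
    \<and> (\<forall>x\<in>Mb \<xi>. sshift (That \<xi> T x) = That (Lshift \<xi>) T (sshift x))"
proof -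
  have bl: "banach_lattice TYPE('a)" using assms(1) by (simp add: KB_space_def)
  have inB: "\<xi> n \<in> B" for n using assms(3) by (simp add: forward_filtration_def)
  have P: "order_projection (\<xi> n)" for n using assms(2) inB unfolding bool_subalg_def by blast
  have z: "\<xi> 0 = (\<lambda>x. 0)" using assms(3) by (simp add: forward_filtration_def)
  have ch: "n \<le> m \<Longrightarrow> \<xi> n \<circ> \<xi> m = \<xi> n" for n m by (rule ff_chain[OF assms(3,2)])
  have vol: "\<xi> n x = \<xi> n y \<Longrightarrow> \<xi> n (T x) = \<xi> n (T y)" for n x y
    using assms(4) inB unfolding volterra_def by blast
  have Tb: "bounded_linear T" using assms(4) bl pos_op_bounded unfolding volterra_def by blast
  have LP: "order_projection (Lshift \<xi> n)" for n by (simp add: Lshift_def P)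
  have Lch: "n \<le> m \<Longrightarrow> Lshift \<xi> n \<circ> Lshift \<xi> m = Lshift \<xi> n" for n m
  proof (cases "n = 0")
    case True thus ?thesis by (simp add: Lshift_def z o_def)
  next
    case False
    assume "n \<le> m"
    hence "m \<noteq> 0" "Suc n \<le> Suc m" using False by auto
    thus ?thesis using False ch[of "Suc n" "Suc m"] by (simp add: Lshift_def)
  qed
  have Lvol: "Lshift \<xi> n x = Lshift \<xi> n y \<Longrightarrow> Lshift \<xi> n (T x) = Lshift \<xi> n (T y)" for n x y
  proof (cases "n = 0")
    case True thus ?thesis by (simp add: Lshift_def z)
  next
    case False
    assume "Lshift \<xi> n x = Lshift \<xi> n y"
    hence "\<xi> (Suc n) x = \<xi> (Suc n) y" using False by (simp add: Lshift_def)
    hence "\<xi> (Suc n) (T x) = \<xi> (Suc n) (T y)" by (rule vol)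
    thus ?thesis using False by (simp add: Lshift_def)
  qed
  have chx: "\<xi> n (\<xi> m x) = \<xi> n x" if "n \<le> m" for n m x
    using ch[OF that] by (metis comp_apply)
  have pn: "norm (\<xi> n x) \<le> norm x" for n x by (rule oproj_norm[OF bl P])
  have i1: "vec_seq_bounded_op (Mb \<xi>) (iota \<xi>)"
    unfolding vec_seq_bounded_op_def
  proof (intro conjI allI exI[where x=1])
    show "iota \<xi> x \<in> Mb \<xi>" for x
    proof -
      have "bounded (range (\<lambda>n. \<xi> n x))" by (rule bdd_normI[where B="norm x"]) (rule pn)
      moreover have "(\<lambda>n. \<xi> n x) \<in> M0 \<xi>" unfolding M0_def using chx by blast
      ultimately show ?thesis unfolding Mb_def iota_def by blast
    qed
    show "iota \<xi> (x + y) = (\<lambda>n. iota \<xi> x n + iota \<xi> y n)" for x y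
      unfolding iota_def by (simp add: oproj_basic(1)[OF P])
    show "iota \<xi> (c *\<^sub>R x) = (\<lambda>n. c *\<^sub>R iota \<xi> x n)" for c x
      unfolding iota_def by (simp add: oproj_basic(2)[OF P])
    show "supnorm (iota \<xi> x) \<le> 1 * norm x" for x
      unfolding iota_def using pn by (simp add: sn_le)
  qed
  have s1: "seq_bounded_op (Mb \<xi>) (Mb (Lshift \<xi>)) sshift"
    unfolding seq_bounded_op_def
  proof (intro conjI ballI allI exI[where x=1])
    show "sshift x \<in> Mb (Lshift \<xi>)" if h: "x \<in> Mb \<xi>" for x
    proof -
      have b: "bounded (range x)" using h by (simp add: Mb_def)
      have "norm (sshift x n) \<le> supnorm x" for n
        using sn_ge[OF b] sn_nonneg[OF b] by (simp add: sshift_def)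
      hence "bounded (range (sshift x))" by (rule bdd_normI)
      moreover have "sshift x \<in> M0 (Lshift \<xi>)"
        unfolding M0_def
      proof (intro CollectI allI impI)
        fix n m :: nat assume nm: "n \<le> m"
        show "Lshift \<xi> n (sshift x m) = sshift x n"
        proof (cases "n = 0")
          case True thus ?thesis by (simp add: Lshift_def z sshift_def)
        next
          case False
          hence "m \<noteq> 0" "Suc n \<le> Suc m" using nm by auto
          moreover have "\<xi> (Suc n) (x (Suc m)) = x (Suc n)" using h \<open>Suc n \<le> Suc m\<close>
            unfolding Mb_def M0_def by blast
          ultimately show ?thesis using False by (simp add: Lshift_def sshift_def)
        qed
      qed
      ultimately show ?thesis by (simp add: Mb_def)
    qed
    show "sshift (\<lambda>n. x n + y n) = (\<lambda>n. sshift x n + sshift y n)" for x y :: "nat \<Rightarrow> 'a"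
      by (rule ext) (simp add: sshift_def)
    show "sshift (\<lambda>n. c *\<^sub>R x n) = (\<lambda>n. c *\<^sub>R sshift x n)" for x :: "nat \<Rightarrow> 'a" and c
      by (rule ext) (simp add: sshift_def)
    show "supnorm (sshift x) \<le> 1 * supnorm x" if h: "x \<in> Mb \<xi>" for x
    proof -
      have b: "bounded (range x)" using h by (simp add: Mb_def)
      have "norm (sshift x n) \<le> supnorm x" for n
        using sn_ge[OF b] sn_nonneg[OF b] by (simp add: sshift_def)
      thus ?thesis by (simp add: sn_le)
    qed
  qed
  have e1: "iota \<xi> (T x) = That \<xi> T (iota \<xi> x)" for x
    unfolding iota_def That_def
  proof
    fix n
    have "\<xi> n x = \<xi> n (\<xi> n x)" using chx[of n n] by simp
    thus "\<xi> n (T x) = \<xi> n (T (\<xi> n x))" by (rule vol)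
  qed
  have e2: "sshift (That \<xi> T x) = That (Lshift \<xi>) T (sshift x)" for x
    by (auto simp: sshift_def That_def Lshift_def z)
  have t0: "\<forall>x\<in>M0 \<xi>. That \<xi> T x \<in> M0 \<xi>" by (intro ballI That_M0[where \<eta>=\<xi> and T=T]) (erule ch, erule vol, assumption)
  have o1: "seq_bounded_op (Mb \<xi>) (Mb \<xi>) (That \<xi> T)"
    by (rule That_op[where \<eta>=\<xi> and T=T]) (rule bl, rule P, erule ch, erule vol, rule Tb)
  have o2: "seq_bounded_op (Mb (Lshift \<xi>)) (Mb (Lshift \<xi>)) (That (Lshift \<xi>) T)"
    by (rule That_op[where \<eta>="Lshift \<xi>" and T=T]) (rule bl, rule LP, erule Lch, erule Lvol, rule Tb)
  show ?thesis
    apply (intro conjI)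
    apply (rule t0)
    apply (rule sbl[OF bl P])
    apply (rule sbl[OF bl LP])
    apply (rule o1)
    apply (rule o2)
    apply (rule i1)
    apply (rule Tb)
    apply (rule s1)
    using e1 e2 by simp_all
qed

end
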